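(* Let $\mathcal{A}$ be a pca in which $0,1$ are separable, and let $\gamma:\mathcal{A}\to S$ be a precomplete generalized numbering. Then $\gamma$ is not injective.
   Context: A pca is a set $\mathcal{A}$ with partial binary application containing $k,s$ with $kab=a$, $sab\downarrow$, $sabc\simeq ac(bc)$. With $i=skk$, $\mathsf{false}=ki$, $\langle a,b\rangle=\lambda^*z.zab$ ($\lambda^*$ standard combinatory abstraction), $0=\bar 0=i$, $\overline{n+1}=\langle\mathsf{false},\bar n\rangle$, $1=\bar 1$. $0,1$ are separable in $\mathcal{A}$ if there is a total $c\in\mathcal{A}$ with $ca\in\{0,1\}$ for all $a$ such that $ca=0\Rightarrow a\neq1$ and $ca=1\Rightarrow a\neq 0$. A generalized numbering is a surjective map $\gamma:\mathcal{A}\to S$ onto a set $S$; write $a\sim_\gamma a'$ iff $\gamma(a)=\gamma(a')$. $\gamma$ is precomplete if for every $b\in\mathcal{A}$ there is a total $f\in\mathcal{A}$ (i.e. $fa$ defined for all $a$) such that for all $a\in\mathcal{A}$, $ba\downarrow\Rightarrow fa\sim_\gamma ba$. *)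

theory Defs
  imports Main
begin

text \<open>A partial applicative structure: partial application is modelled as
  a function into option; None means undefined.  Application of possibly
  undefined terms (strict, Kleene style):\<close>

definition ap :: "('a \<Rightarrow> 'a \<Rightarrow> 'a option) \<Rightarrow> 'a option \<Rightarrow> 'a option \<Rightarrow> 'a option" where
  "ap app x y = Option.bind x (\<lambda>u. Option.bind y (\<lambda>v. app u v))"

definition is_pca :: "('a \<Rightarrow> 'a \<Rightarrow> 'a option) \<Rightarrow> 'a \<Rightarrow> 'a \<Rightarrow> bool" where
  "is_pca app k s \<longleftrightarrow>
     (\<forall>a b. ap app (ap app (Some k) (Some a)) (Some b) = Some a) \<and>
     (\<forall>a b. ap app (ap app (Some s) (Some a)) (Some b) \<noteq> None) \<and>
     (\<forall>a b c. ap app (ap app (ap app (Some s) (Some a)) (Some b)) (Some c)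
              = ap app (ap app (Some a) (Some c)) (ap app (Some b) (Some c)))"

definition pca_i :: "('a \<Rightarrow> 'a \<Rightarrow> 'a option) \<Rightarrow> 'a \<Rightarrow> 'a \<Rightarrow> 'a option" where
  "pca_i app k s = ap app (ap app (Some s) (Some k)) (Some k)"

definition pca_false :: "('a \<Rightarrow> 'a \<Rightarrow> 'a option) \<Rightarrow> 'a \<Rightarrow> 'a \<Rightarrow> 'a option" where
  "pca_false app k s = ap app (Some k) (pca_i app k s)"

text \<open>Pairing <a,b> = \<lambda>*z. z a b, computed by standard combinatory abstraction:
  \<lambda>*z.((z a) b) = s (\<lambda>*z. z a) (\<lambda>*z. b) = s (s i (k a)) (k b).\<close>
definition pca_pair :: "('a \<Rightarrow> 'a \<Rightarrow> 'a option) \<Rightarrow> 'a \<Rightarrow> 'a \<Rightarrow> 'a option \<Rightarrow> 'a option \<Rightarrow> 'a option" where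
  "pca_pair app k s a b =
     ap app (ap app (Some s)
                    (ap app (ap app (Some s) (pca_i app k s)) (ap app (Some k) a)))
            (ap app (Some k) b)"

fun pca_num :: "('a \<Rightarrow> 'a \<Rightarrow> 'a option) \<Rightarrow> 'a \<Rightarrow> 'a \<Rightarrow> nat \<Rightarrow> 'a option" where
  "pca_num app k s 0 = pca_i app k s"
| "pca_num app k s (Suc n) = pca_pair app k s (pca_false app k s) (pca_num app k s n)"

definition zero_one_separable :: "('a \<Rightarrow> 'a \<Rightarrow> 'a option) \<Rightarrow> 'a \<Rightarrow> 'a \<Rightarrow> bool" where
  "zero_one_separable app k s \<longleftrightarrow>
     (\<exists>c. \<forall>a. app c a \<noteq> None \<and>
              (app c a = pca_num app k s 0 \<or> app c a = pca_num app k s 1) \<and>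
              (app c a = pca_num app k s 0 \<longrightarrow> Some a \<noteq> pca_num app k s 1) \<and>
              (app c a = pca_num app k s 1 \<longrightarrow> Some a \<noteq> pca_num app k s 0))"

definition precomplete :: "('a \<Rightarrow> 'a \<Rightarrow> 'a option) \<Rightarrow> ('a \<Rightarrow> 's) \<Rightarrow> bool" where
  "precomplete app \<gamma> \<longleftrightarrow>
     (\<forall>b. \<exists>f. (\<forall>a. app f a \<noteq> None) \<and>
              (\<forall>a x. app b a = Some x \<longrightarrow> (\<exists>y. app f a = Some y \<and> \<gamma> y = \<gamma> x)))"

end

theory Submission
  imports Defs
begin

theorem mainTheorem15:
  fixes app :: "'a \<Rightarrow> 'a \<Rightarrow> 'a option" and k s :: 'a and \<gamma> :: "'a \<Rightarrow> 's"
  assumes "is_pca app k s"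
    and "zero_one_separable app k s"
    and "surj \<gamma>"
    and "precomplete app \<gamma>"
  shows "\<not> inj \<gamma>"
proof
  assume inj: "inj \<gamma>"
  note P = assms(1)[unfolded is_pca_def ap_def]
  define K where "K a = the (app k a)" for a
  define S where "S a b = the (Option.bind (app s a) (\<lambda>u. app u b))" for a b
  have Kk: "app k a = Some (K a)" for a
    using P[THEN conjunct1, rule_format, of a a] by (cases "app k a") (auto simp: K_def)
  have Ka: "app (K a) b = Some a" for a b
    using P Kk[of a] by (metis bind.simps(2))
  have Sd: "Option.bind (app s a) (\<lambda>u. app u b) = Some (S a b)" for a b
    using P[THEN conjunct2, THEN conjunct1, rule_format, of a b] by (cases "Option.bind (app s a) (\<lambda>u. app u b)") (auto simp: S_def)
  have Sa: "app (S a b) c = ap app (app a c) (app b c)" for a b c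
    using P[THEN conjunct2, THEN conjunct2, rule_format, of a b c] Sd[of a b]
    by (simp add: ap_def)
  define i where "i = S k k"
  have Ia: "app i x = Some x" for x
    by (simp add: i_def Sa ap_def Kk Ka)
  define ii where "ii = S i i"
  have IIa: "app ii x = app x x" for x
    by (simp add: ii_def Sa ap_def Ia)
  from assms(2) obtain c where c: "\<forall>a. app c a \<noteq> None \<and>
              (app c a = pca_num app k s 0 \<or> app c a = pca_num app k s 1) \<and>
              (app c a = pca_num app k s 0 \<longrightarrow> Some a \<noteq> pca_num app k s 1) \<and>
              (app c a = pca_num app k s 1 \<longrightarrow> Some a \<noteq> pca_num app k s 0)"
    unfolding zero_one_separable_def by blast
  define one where "one = S (S i (K (K i))) (K i)"
  have n0: "pca_num app k s 0 = Some i"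
    by (simp add: pca_i_def ap_def Sd i_def)
  have n1: "pca_num app k s 1 = Some one"
    by (simp add: One_nat_def pca_i_def pca_false_def pca_pair_def ap_def Sd Kk i_def[symmetric] one_def)
  have onea: "app one u = ap app (app u (K i)) (Some i)" for u
    by (simp add: one_def Sa ap_def Ia Kk Ka)
  define C where "C = S (K c) ii"
  have Ca: "app C x = Option.bind (app x x) (app c)" for x
    by (simp add: C_def Sa ap_def Ka IIa)
  define T where "T = S (S C (K k)) (K one)"
  define b where "b = S T (K i)"
  have ba: "app b x = ap app (ap app (ap app (app C x) (Some k)) (Some one)) (Some i)" for x
    by (simp add: b_def T_def Sa Ka ap_def)
  from assms(4) obtain f where f: "\<forall>a. app f a \<noteq> None"
    "\<forall>a x. app b a = Some x \<longrightarrow> (\<exists>y. app f a = Some y \<and> \<gamma> y = \<gamma> x)"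
    unfolding precomplete_def by blast
  have fb: "app b a = Some x \<Longrightarrow> app f a = Some x" for a x
    using f(2) inj by (metis injD)
  obtain y where y: "app f f = Some y" using f(1) by blast
  obtain r where r: "app c y = Some r" using c by blast
  have "r = i \<or> r = one" using c r n0 n1 by (metis option.inject)
  then show False
  proof
    assume "r = i"
    then have "app b f = Some one"
      by (simp add: ba Ca y r ap_def Ia Kk Ka)
    then have "y = one" using fb y by simp
    then show False using c r n0 n1 \<open>r = i\<close> by metis
  next
    assume "r = one"
    then have "app b f = Some i"
      by (simp add: ba Ca y r ap_def Ia Kk Ka onea)
    then have "y = i" using fb y by simp
    then show False using c r n0 n1 \<open>r = one\<close> by metis
  qed
qed

end
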